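(* Let $a(\lambda)\le b(\lambda)<c(\lambda)\le d(\lambda)$ be polynomials and let $W\le\mathbb{F}_2^{d}$ be a fixed subspace of dimension $c$. Sample $T\le W$ uniformly among subspaces of dimension $b$ and then $S\le T$ uniformly among subspaces of $T$ of dimension $a$. Let $\{\mathcal{O}_S\}_S$ be any family of classical oracles such that $\mathcal{O}_S(z)=\bot$ for all $z\notin S$, and let $\{\mathcal{O}_{S,T}\}_{S,T}$ be any family of classical oracles such that $\mathcal{O}_{S,T}(z)=\mathcal{O}_S(z)$ for $z\in S$ and $\mathcal{O}_{S,T}(z)=\bot$ for $z\notin T$. Let $U^{(\cdot)}$ be any efficient isometry making (polynomially many) superposition queries to a classical oracle. Define $|\psi_S\rangle:=U^{\mathcal{O}_S}|S\rangle$, $|\psi_T\rangle:=U^{\mathcal{O}_{S,T}}|S\rangle$ (where $|S\rangle$ is a classical description of $S$), and $$|\phi_S\rangle=\frac{1}{\sqrt{\binom{c}{b}_2\binom{b}{a}_2}}\sum_{S,T}|S,T\rangle|\psi_S\rangle,\qquad |\phi_T\rangle=\frac{1}{\sqrt{\binom{c}{b}_2\binom{b}{a}_2}}\sum_{S,T}|S,T\rangle|\psi_T\rangle,$$ where the sums range over all pairs $S\le T\le W$ with $\dim T=b$, $\dim S=a$. Then there is a polynomial $q(\lambda)$ (depending only on the number of oracle queries of $U$) such that $$\mathrm{TD}\big(|\phi_S\rangle\langle\phi_S|,\;|\phi_T\rangle\langle\phi_T|\big)\le \frac{q}{2^{(c-b)/2}}.$$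
   Context: $\binom{c}{b}_2$ denotes the Gaussian binomial coefficient (the number of $b$-dimensional subspaces of a $c$-dimensional $\mathbb{F}_2$-space). $\mathrm{TD}$ is trace distance. Oracles are accessed in quantum superposition via $|z\rangle|w\rangle\mapsto|z\rangle|w\oplus\mathcal{O}(z)\rangle$. *)

theory Defs
  imports Complex_Main "HOL-Computational_Algebra.Polynomial"
begin

(* F_2^d is modelled as subsets of {..<d}; vector addition is symmetric difference. *)
definition sdiff :: "nat set \<Rightarrow> nat set \<Rightarrow> nat set" where
  "sdiff x y = (x - y) \<union> (y - x)"

definition is_subspace :: "nat \<Rightarrow> nat set set \<Rightarrow> bool" where
  "is_subspace d V \<longleftrightarrow> V \<subseteq> Pow {..<d} \<and> {} \<in> V \<and> (\<forall>x\<in>V. \<forall>y\<in>V. sdiff x y \<in> V)"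

definition subspace_dim :: "nat \<Rightarrow> nat set set \<Rightarrow> nat \<Rightarrow> bool" where
  "subspace_dim d V k \<longleftrightarrow> is_subspace d V \<and> card V = 2 ^ k"

definition gbinom2 :: "nat \<Rightarrow> nat \<Rightarrow> real" where
  "gbinom2 n k = (\<Prod>i<k. (2 ^ (n - i) - 1)) / (\<Prod>i<k. (2 ^ (k - i) - 1))"

(* Basis states of the algorithm's register: query input z \<in> F_2^d,
   query output w \<in> F_2^m, workspace index in {..<k}. *)
type_synonym st = "nat set \<times> nat set \<times> nat"
type_synonym vec = "st \<Rightarrow> complex"

definition space :: "nat \<Rightarrow> nat \<Rightarrow> nat \<Rightarrow> st set" where
  "space d m k = Pow {..<d} \<times> Pow {..<m} \<times> {..<k}"

definition vinner :: "'s set \<Rightarrow> ('s \<Rightarrow> complex) \<Rightarrow> ('s \<Rightarrow> complex) \<Rightarrow> complex" where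
  "vinner X \<phi> \<chi> = (\<Sum>x\<in>X. cnj (\<phi> x) * \<chi> x)"

definition apply_mat :: "st set \<Rightarrow> (st \<Rightarrow> st \<Rightarrow> complex) \<Rightarrow> vec \<Rightarrow> vec" where
  "apply_mat X M \<psi> = (\<lambda>x. if x \<in> X then (\<Sum>y\<in>X. M x y * \<psi> y) else 0)"

definition unitary_on :: "st set \<Rightarrow> (st \<Rightarrow> st \<Rightarrow> complex) \<Rightarrow> bool" where
  "unitary_on X M \<longleftrightarrow> (\<forall>y\<in>X. \<forall>y'\<in>X. (\<Sum>x\<in>X. cnj (M x y) * M x y') = (if y = y' then 1 else 0))"

(* superposition query |z>|w>|a> \<mapsto> |z>|w \<oplus> O(z)>|a> *)
definition apply_oracle :: "(nat set \<Rightarrow> nat set) \<Rightarrow> vec \<Rightarrow> vec" where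
  "apply_oracle orc \<psi> = (\<lambda>(z, w, a). \<psi> (z, sdiff w (orc z), a))"

(* query algorithm: start state, then for each unitary U in the list: one oracle query followed by U.
   The number of queries is length Us. *)
definition run_alg :: "st set \<Rightarrow> (st \<Rightarrow> st \<Rightarrow> complex) list \<Rightarrow> (nat set \<Rightarrow> nat set) \<Rightarrow> vec \<Rightarrow> vec" where
  "run_alg X Us orc \<psi>0 = foldl (\<lambda>\<psi> U. apply_mat X U (apply_oracle orc \<psi>)) \<psi>0 Us"

(* trace distance between the pure states |phi><phi| and |chi><chi| (unit vectors) *)
definition td_pure :: "'s set \<Rightarrow> ('s \<Rightarrow> complex) \<Rightarrow> ('s \<Rightarrow> complex) \<Rightarrow> real" where
  "td_pure Y \<phi> \<chi> = sqrt (1 - (cmod (vinner Y \<phi> \<chi>))\<^sup>2)"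

end

theory Submission
  imports Defs "HOL-Analysis.L2_Norm"
begin


lemma sdiff_comm: "sdiff x y = sdiff y x" unfolding sdiff_def by auto
lemma sdiff_empty[simp]: "sdiff x {} = x" "sdiff {} x = x" unfolding sdiff_def by auto
lemma sdiff_self[simp]: "sdiff x x = {}" unfolding sdiff_def by auto
lemma sdiff_assoc: "sdiff (sdiff x y) z = sdiff x (sdiff y z)" unfolding sdiff_def by auto
lemma sdiff_cancel[simp]: "sdiff x (sdiff x y) = y" "sdiff (sdiff y x) x = y" unfolding sdiff_def by auto
lemma sdiff_inj: "sdiff v x = sdiff v y \<Longrightarrow> x = y" unfolding sdiff_def by blast
lemma sdiff_lc: "sdiff x (sdiff v y) = sdiff v (sdiff x y)" unfolding sdiff_def by auto
lemma sdiff_vv: "sdiff (sdiff v x) (sdiff v y) = sdiff x y" unfolding sdiff_def by auto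
lemma sdiff_sub: "x \<subseteq> A \<Longrightarrow> y \<subseteq> A \<Longrightarrow> sdiff x y \<subseteq> A" unfolding sdiff_def by auto

lemma subspace_finite: "is_subspace d V \<Longrightarrow> finite V"
  unfolding is_subspace_def by (meson finite_Pow_iff finite_lessThan finite_subset)

definition ext :: "nat set set \<Rightarrow> nat set \<Rightarrow> nat set set" where
  "ext A v = A \<union> sdiff v ` A"

lemma ext_subspace:
  assumes "is_subspace d A" "v \<subseteq> {..<d}"
  shows "is_subspace d (ext A v)"
proof -
  have A1: "A \<subseteq> Pow {..<d}" and A2: "{} \<in> A"
    and A3: "\<And>x y. x\<in>A \<Longrightarrow> y\<in>A \<Longrightarrow> sdiff x y \<in> A"
    using assms(1) unfolding is_subspace_def by auto
  have im: "sdiff v z \<in> ext A v" if "z \<in> A" for z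
    unfolding ext_def using that by blast
  have inA: "z \<in> ext A v" if "z \<in> A" for z
    unfolding ext_def using that by blast
  have "ext A v \<subseteq> Pow {..<d}"
  proof
    fix x assume "x \<in> ext A v"
    then consider "x \<in> A" | y where "y \<in> A" "x = sdiff v y" unfolding ext_def by blast
    then show "x \<in> Pow {..<d}"
    proof cases
      case 1 then show ?thesis using A1 by blast
    next
      case 2
      then have "y \<subseteq> {..<d}" using A1 by blast
      then show ?thesis using 2 assms(2) sdiff_sub by blast
    qed
  qed
  moreover have "{} \<in> ext A v" using inA A2 by blast
  moreover have "sdiff x y \<in> ext A v" if hxy: "x \<in> ext A v" "y \<in> ext A v" for x y
  proof -
    consider "x \<in> A" "y \<in> A" | x' where "x' \<in> A" "x = sdiff v x'" "y \<in> A"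
      | y' where "x \<in> A" "y' \<in> A" "y = sdiff v y'"
      | x' y' where "x' \<in> A" "x = sdiff v x'" "y' \<in> A" "y = sdiff v y'"
      using hxy unfolding ext_def by blast
    then show ?thesis
    proof cases
      case 1 then show ?thesis using A3 inA by blast
    next
      case 2 
      then have "sdiff x y = sdiff v (sdiff x' y)" by (simp add: sdiff_assoc)
      then show ?thesis using 2 A3 im by metis
    next
      case 3
      then have "sdiff x y = sdiff v (sdiff x y')" by (simp add: sdiff_lc)
      then show ?thesis using 3 A3 im by metis
    next
      case 4 then have "sdiff x y = sdiff x' y'"
        by (simp add: sdiff_vv)
      then show ?thesis using A3 4 inA by metis
    qed
  qed
  ultimately show ?thesis unfolding is_subspace_def by blast
qed

lemma ext_card:
  assumes "is_subspace d A" "v \<notin> A"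
  shows "card (ext A v) = 2 * card A"
proof -
  have fin: "finite A" using assms subspace_finite by blast
  have disj: "A \<inter> sdiff v ` A = {}"
  proof (rule ccontr)
    assume "A \<inter> sdiff v ` A \<noteq> {}"
    then obtain x y where "x \<in> A" "y \<in> A" "x = sdiff v y" by blast
    then have "v = sdiff x y" by (simp add: sdiff_assoc sdiff_lc)
    then show False using assms \<open>x \<in> A\<close> \<open>y \<in> A\<close> unfolding is_subspace_def by auto
  qed
  have "card (sdiff v ` A) = card A" by (meson card_image inj_onI sdiff_inj)
  then show ?thesis unfolding ext_def using card_Un_disjoint[OF fin _ disj] fin by simp
qed

lemma ext_in:
  assumes "is_subspace d T" "A \<subseteq> T" "v \<in> T"
  shows "ext A v \<subseteq> T"
  using assms unfolding ext_def is_subspace_def by auto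

lemma ext_mem: "is_subspace d A \<Longrightarrow> v \<in> ext A v"
  unfolding ext_def is_subspace_def by (auto intro: image_eqI[where x="{}"])

definition lvl :: "nat \<Rightarrow> nat set set \<Rightarrow> nat set set \<Rightarrow> nat \<Rightarrow> nat set set set" where
  "lvl d A W k = {T. is_subspace d T \<and> card T = 2 ^ k \<and> A \<subseteq> T \<and> T \<subseteq> W}"

lemma lvl_finite: "is_subspace d W \<Longrightarrow> finite (lvl d A W k)"
proof -
  assume "is_subspace d W"
  then have "finite (Pow W)" using subspace_finite by blast
  moreover have "lvl d A W k \<subseteq> Pow W" unfolding lvl_def by auto
  ultimately show ?thesis using finite_subset by blast
qed

lemma up_count:
  assumes A: "is_subspace d A" and W: "is_subspace d W" and AW: "A \<subseteq> W"
    and cA: "card A = 2 ^ k" and cW: "card W = 2 ^ k'" and kk: "k < k'"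
  shows "card (lvl d A W (Suc k)) = 2 ^ (k' - k) - 1"
proof -
  let ?B = "lvl d A W (Suc k)"
  have finW: "finite W" using W subspace_finite by blast
  have finA: "finite A" using A subspace_finite by blast
  have finB: "finite ?B" using W lvl_finite by blast
  have WP: "W \<subseteq> Pow {..<d}" using W unfolding is_subspace_def by auto
  have img: "ext A v \<in> ?B" if "v \<in> W - A" for v
  proof -
    have "v \<subseteq> {..<d}" using that WP by blast
    then have "is_subspace d (ext A v)" using ext_subspace A by blast
    moreover have "card (ext A v) = 2 ^ Suc k" using ext_card[OF A] that cA by simp
    moreover have "A \<subseteq> ext A v" unfolding ext_def by blast
    moreover have "ext A v \<subseteq> W" using ext_in[OF W AW] that by blast
    ultimately show ?thesis unfolding lvl_def by blast
  qed
  have fib: "{v \<in> W - A. ext A v = T} = T - A" if T: "T \<in> ?B" for T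
  proof
    show "{v \<in> W - A. ext A v = T} \<subseteq> T - A" using ext_mem[OF A] by blast
  next
    show "T - A \<subseteq> {v \<in> W - A. ext A v = T}"
    proof
      fix v assume v: "v \<in> T - A"
      have Ts: "is_subspace d T" "card T = 2 ^ Suc k" "A \<subseteq> T" "T \<subseteq> W"
        using T unfolding lvl_def by auto
      have "ext A v \<subseteq> T" using ext_in[OF Ts(1) Ts(3)] v by blast
      moreover have "card (ext A v) = card T" using ext_card[OF A] v cA Ts(2) by simp
      moreover have "finite T" using Ts(1) subspace_finite by blast
      ultimately have "ext A v = T" using card_subset_eq by blast
      then show "v \<in> {v \<in> W - A. ext A v = T}" using v Ts(4) by blast
    qed
  qed
  have cfib: "card (T - A) = 2 ^ k" if T: "T \<in> ?B" for T
  proof -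
    have "card T = 2 ^ Suc k" "A \<subseteq> T" using T unfolding lvl_def by auto
    then show ?thesis using card_Diff_subset[OF finA] cA by simp
  qed
  have "card (W - A) = (\<Sum>T\<in>?B. of_nat (card {v \<in> W - A. ext A v = T}) * (1::nat))"
    using sum_fun_comp[of "W - A" ?B "ext A" "\<lambda>_. (1::nat)"] finW finB img by auto
  also have "\<dots> = (\<Sum>T\<in>?B. 2 ^ k)" using fib cfib by simp
  also have "\<dots> = card ?B * 2 ^ k" by simp
  finally have e1: "card (W - A) = card ?B * 2 ^ k" .
  have "card (W - A) = 2 ^ k' - 2 ^ k" using card_Diff_subset[OF finA AW] cA cW by simp
  also have "\<dots> = (2 ^ (k' - k) - 1) * 2 ^ k"
    using kk by (simp add: diff_mult_distrib power_add[symmetric])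
  finally show ?thesis using e1 by simp
qed

lemma den_alt: "(\<Prod>i<k. (2 ^ (k - i) - 1 :: real)) = (\<Prod>i<k. (2 ^ Suc i - 1))"
proof (induction k)
  case 0 then show ?case by simp
next
  case (Suc k)
  have "(\<Prod>i<Suc k. (2 ^ (Suc k - i) - 1 :: real)) = (2 ^ Suc k - 1) * (\<Prod>i<k. (2 ^ (Suc k - Suc i) - 1))"
    by (subst prod.lessThan_Suc_shift) simp
  also have "\<dots> = (2 ^ Suc k - 1) * (\<Prod>i<k. (2 ^ (k - i) - 1))" by simp
  finally show ?case using Suc by (simp add: mult.commute)
qed

lemma G_alt: "gbinom2 n k = (\<Prod>i<k. (2 ^ (n - i) - 1)) / (\<Prod>i<k. (2 ^ Suc i - 1))"
  unfolding gbinom2_def den_alt ..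

lemma den_pos: "(\<Prod>i<k. (2 ^ Suc i - 1 :: real)) > 0"
proof -
  have "(2::real) ^ Suc i - 1 > 0" for i
    by (metis diff_gt_0_iff_gt one_less_numeral_iff one_less_power semiring_norm(76) zero_less_Suc)
  then show ?thesis by (intro prod_pos) auto
qed

lemma G0: "gbinom2 n 0 = 1" unfolding gbinom2_def by simp

lemma G_pos: "k \<le> n \<Longrightarrow> gbinom2 n k > 0"
proof -
  assume kn: "k \<le> n"
  have "(2::real) ^ (n - i) - 1 > 0" if "i < k" for i
  proof -
    have "n - i > 0" using that kn by simp
    then show ?thesis
      by (metis diff_gt_0_iff_gt one_less_numeral_iff one_less_power semiring_norm(76))
  qed
  then have "(\<Prod>i<k. ((2::real) ^ (n - i) - 1)) > 0" by (intro prod_pos) auto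
  then show ?thesis unfolding G_alt using den_pos by simp
qed

lemma G_Suc: "gbinom2 n (Suc m) = gbinom2 n m * (2 ^ (n - m) - 1) / (2 ^ Suc m - 1)"
  unfolding G_alt by simp

lemma G_diag: "gbinom2 n n = 1"
proof -
  have "(\<Prod>i<n. (2 ^ (n - i) - 1 :: real)) > 0" using den_pos den_alt by metis
  then have "(\<Prod>i<n. (2 ^ (n - i) - 1 :: real)) \<noteq> 0" by linarith
  then show ?thesis unfolding gbinom2_def by (rule divide_self)
qed

lemma G_sub1: "gbinom2 (Suc m) m = 2 ^ Suc m - 1"
proof -
  have "1 = gbinom2 (Suc m) (Suc m)" using G_diag by simp
  also have "\<dots> = gbinom2 (Suc m) m / (2 ^ Suc m - 1)" using G_Suc by simp
  finally show ?thesis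
    by (metis den_pos div_by_1 divide_eq_1_iff lessThan_0 prod.lessThan_Suc prod.empty)
qed

lemma G_shift: "gbinom2 (Suc n) (Suc k) = gbinom2 n k * (2 ^ Suc n - 1) / (2 ^ Suc k - 1)"
proof -
  have "(\<Prod>i<Suc k. (2 ^ (Suc n - i) - 1 :: real)) = (2 ^ Suc n - 1) * (\<Prod>i<k. (2 ^ (n - i) - 1))"
    by (subst prod.lessThan_Suc_shift) simp
  then show ?thesis unfolding G_alt by simp
qed

lemma card_filter_sum: "finite B \<Longrightarrow> card {x\<in>B. P x} = (\<Sum>x\<in>B. if P x then 1 else 0)"
  by (simp add: sum.If_cases Int_def)

lemma lvl_count:
  "\<And>n A W j. is_subspace d A \<Longrightarrow> is_subspace d W \<Longrightarrow> A \<subseteq> W \<Longrightarrow> card A = 2 ^ j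
   \<Longrightarrow> card W = 2 ^ (j + n) \<Longrightarrow> m \<le> n \<Longrightarrow> real (card (lvl d A W (j + m))) = gbinom2 n m"
proof (induction m)
  case (0 n A W j)
  have "lvl d A W j = {A}"
  proof
    show "lvl d A W j \<subseteq> {A}"
    proof
      fix T assume "T \<in> lvl d A W j"
      then have "is_subspace d T" "card T = card A" "A \<subseteq> T" unfolding lvl_def using 0 by auto
      then show "T \<in> {A}" using card_subset_eq subspace_finite by (metis singletonI)
    qed
    show "{A} \<subseteq> lvl d A W j" unfolding lvl_def using 0 by auto
  qed
  then show ?case using G0 by simp
next
  case (Suc m n A W j)
  let ?Am = "lvl d A W (j + m)"
  let ?B = "lvl d A W (j + Suc m)"
  have finAm: "finite ?Am" and finB: "finite ?B" using lvl_finite Suc.prems(2) by auto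
  have cAm: "real (card ?Am) = gbinom2 n m" using Suc.IH Suc.prems by simp
  have r1: "card {T\<in>?B. T' \<subseteq> T} = 2 ^ (n - m) - 1" if T': "T' \<in> ?Am" for T'
  proof -
    have T's: "is_subspace d T'" "card T' = 2 ^ (j + m)" "A \<subseteq> T'" "T' \<subseteq> W"
      using T' unfolding lvl_def by auto
    have "{T\<in>?B. T' \<subseteq> T} = lvl d T' W (Suc (j + m))"
      unfolding lvl_def using T's(3) by auto
    moreover have "card (lvl d T' W (Suc (j + m))) = 2 ^ ((j + n) - (j + m)) - 1"
      by (rule up_count[OF T's(1) Suc.prems(2) T's(4) T's(2) Suc.prems(5)]) (use Suc.prems(6) in simp)
    ultimately show ?thesis by simp
  qed
  have r2: "real (card {T'\<in>?Am. T' \<subseteq> T}) = 2 ^ Suc m - 1" if T: "T \<in> ?B" for T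
  proof -
    have Ts: "is_subspace d T" "card T = 2 ^ (j + Suc m)" "A \<subseteq> T" "T \<subseteq> W"
      using T unfolding lvl_def by auto
    have "{T'\<in>?Am. T' \<subseteq> T} = lvl d A T (j + m)"
      unfolding lvl_def using Ts(4) by auto
    moreover have "real (card (lvl d A T (j + m))) = gbinom2 (Suc m) m"
      by (rule Suc.IH[OF Suc.prems(1) Ts(1) Ts(3) Suc.prems(4)]) (use Ts(2) in auto)
    ultimately show ?thesis using G_sub1 by simp
  qed
  have "(\<Sum>T'\<in>?Am. card {T\<in>?B. T' \<subseteq> T}) = (\<Sum>T'\<in>?Am. \<Sum>T\<in>?B. if T' \<subseteq> T then 1 else 0)"
    using card_filter_sum[OF finB] by simp
  also have "\<dots> = (\<Sum>T\<in>?B. \<Sum>T'\<in>?Am. if T' \<subseteq> T then 1 else 0)" by (rule sum.swap)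
  also have "\<dots> = (\<Sum>T\<in>?B. card {T'\<in>?Am. T' \<subseteq> T})"
    using card_filter_sum[OF finAm] by simp
  finally have eq: "(\<Sum>T'\<in>?Am. card {T\<in>?B. T' \<subseteq> T}) = (\<Sum>T\<in>?B. card {T'\<in>?Am. T' \<subseteq> T})" .
  have e1: "real (\<Sum>T'\<in>?Am. card {T\<in>?B. T' \<subseteq> T}) = real (card ?Am) * (2 ^ (n - m) - 1)"
    using r1 by (simp add: of_nat_diff)
  have e2: "real (\<Sum>T\<in>?B. card {T'\<in>?Am. T' \<subseteq> T}) = real (card ?B) * (2 ^ Suc m - 1)"
    using r2 by (simp add: of_nat_sum)
  have "real (card ?B) * (2 ^ Suc m - 1) = real (card ?Am) * (2 ^ (n - m) - 1)"
    using e1 e2 eq by metis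
  then have "real (card ?B) * (2 ^ Suc m - 1) = gbinom2 n m * (2 ^ (n - m) - 1)"
    using cAm by simp
  moreover have "(2::real) ^ Suc m - 1 > 0"
    by (metis diff_gt_0_iff_gt one_less_numeral_iff one_less_power semiring_norm(76) zero_less_Suc)
  ultimately have "real (card ?B) = gbinom2 n m * (2 ^ (n - m) - 1) / (2 ^ Suc m - 1)"
    by (simp add: field_simps)
  then show ?case using G_Suc by simp
qed

lemma zero_subspace: "is_subspace d {{}}"
  unfolding is_subspace_def by auto

lemma lvl0: "lvl d {{}} W k = {T. subspace_dim d T k \<and> T \<subseteq> W}"
  unfolding lvl_def subspace_dim_def is_subspace_def by auto

lemma count_P:
  assumes W: "is_subspace d W" "card W = 2 ^ c" and ab: "a \<le> b" and bc: "b \<le> c"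
  shows "real (card {(S, T). subspace_dim d S a \<and> subspace_dim d T b \<and> S \<subseteq> T \<and> T \<subseteq> W})
           = gbinom2 c b * gbinom2 b a"
proof -
  let ?TT = "lvl d {{}} W b"
  let ?SS = "\<lambda>T. lvl d {{}} T a"
  have eqP: "{(S, T). subspace_dim d S a \<and> subspace_dim d T b \<and> S \<subseteq> T \<and> T \<subseteq> W}
     = (\<lambda>(T, S). (S, T)) ` (SIGMA T:?TT. ?SS T)"
    unfolding lvl0 by auto
  have inj: "inj_on (\<lambda>(T, S). (S, T)) (SIGMA T:?TT. ?SS T)" by (auto simp: inj_on_def)
  have finT: "finite ?TT" using lvl_finite W by blast
  have "{} \<in> W" using W(1) unfolding is_subspace_def by blast
  then have cT: "real (card ?TT) = gbinom2 c b"
    using lvl_count[of d "{{}}" W 0 c b] zero_subspace W bc by simp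
  have cS: "real (card (?SS T)) = gbinom2 b a" if "T \<in> ?TT" for T
  proof -
    have "is_subspace d T" "card T = 2 ^ b" using that unfolding lvl_def by auto
    moreover have "{} \<in> T" using calculation(1) unfolding is_subspace_def by blast
    ultimately show ?thesis using lvl_count[of d "{{}}" T 0 b a] zero_subspace ab by simp
  qed
  have finS: "\<forall>T\<in>?TT. finite (?SS T)" using lvl_finite unfolding lvl_def by blast
  have "card {(S, T). subspace_dim d S a \<and> subspace_dim d T b \<and> S \<subseteq> T \<and> T \<subseteq> W}
      = card (SIGMA T:?TT. ?SS T)" unfolding eqP using card_image[OF inj] by simp
  also have "\<dots> = (\<Sum>T\<in>?TT. card (?SS T))" using card_SigmaI[OF finT finS] .
  finally have "real (card {(S, T). subspace_dim d S a \<and> subspace_dim d T b \<and> S \<subseteq> T \<and> T \<subseteq> W})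
      = (\<Sum>T\<in>?TT. real (card (?SS T)))" by simp
  also have "\<dots> = (\<Sum>T\<in>?TT. gbinom2 b a)" using cS by simp
  finally show ?thesis using cT by simp
qed

lemma count_z:
  assumes W: "is_subspace d W" "card W = 2 ^ c" and ab: "a \<le> b" and bc: "b \<le> c"
    and S: "subspace_dim d S a" "S \<subseteq> W"
  shows "real (card {T. subspace_dim d T b \<and> S \<subseteq> T \<and> T \<subseteq> W \<and> z \<in> T - S})
     \<le> real (card {T. subspace_dim d T b \<and> S \<subseteq> T \<and> T \<subseteq> W}) / 2 ^ (c - b)"
proof -
  have Ss: "is_subspace d S" "card S = 2 ^ a" using S unfolding subspace_dim_def by auto
  have PT: "{T. subspace_dim d T b \<and> S \<subseteq> T \<and> T \<subseteq> W} = lvl d S W (a + (b - a))"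
    unfolding lvl_def subspace_dim_def using ab by auto
  have cPT: "real (card {T. subspace_dim d T b \<and> S \<subseteq> T \<and> T \<subseteq> W}) = gbinom2 (c - a) (b - a)"
    unfolding PT using lvl_count[OF Ss(1) W(1) S(2) Ss(2), of "c - a" "b - a"] W(2) ab bc by simp
  show ?thesis
  proof (cases "z \<in> W - S \<and> a < b")
    case False
    have "{T. subspace_dim d T b \<and> S \<subseteq> T \<and> T \<subseteq> W \<and> z \<in> T - S} = {}"
    proof (rule ccontr)
      assume "{T. subspace_dim d T b \<and> S \<subseteq> T \<and> T \<subseteq> W \<and> z \<in> T - S} \<noteq> {}"
      then obtain T where T: "subspace_dim d T b" "S \<subseteq> T" "T \<subseteq> W" "z \<in> T - S" by blast
      then have "z \<in> W - S" by blast
      then have "a = b" using False ab by simp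
      then have "card T = card S" using T(1) Ss(2) unfolding subspace_dim_def by simp
      then have "T = S" using T(2) card_subset_eq subspace_finite T(1) unfolding subspace_dim_def by metis
      then show False using T(4) by blast
    qed
    then show ?thesis by (simp only: card.empty) simp
  next
    case True
    have zd: "z \<subseteq> {..<d}" using True W(1) unfolding is_subspace_def by blast
    have E: "is_subspace d (ext S z)" using ext_subspace[OF Ss(1) zd] .
    have cE: "card (ext S z) = 2 ^ Suc a" using ext_card[OF Ss(1)] True Ss(2) by simp
    have EW: "ext S z \<subseteq> W" using ext_in[OF W(1) S(2)] True by blast
    have eqz: "{T. subspace_dim d T b \<and> S \<subseteq> T \<and> T \<subseteq> W \<and> z \<in> T - S}
       = lvl d (ext S z) W (Suc a + (b - Suc a))"
    proof
      show "{T. subspace_dim d T b \<and> S \<subseteq> T \<and> T \<subseteq> W \<and> z \<in> T - S}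
         \<subseteq> lvl d (ext S z) W (Suc a + (b - Suc a))"
      proof
        fix T assume "T \<in> {T. subspace_dim d T b \<and> S \<subseteq> T \<and> T \<subseteq> W \<and> z \<in> T - S}"
        then have T: "is_subspace d T" "card T = 2 ^ b" "S \<subseteq> T" "T \<subseteq> W" "z \<in> T"
          unfolding subspace_dim_def by auto
        have "ext S z \<subseteq> T" using ext_in[OF T(1) T(3) T(5)] .
        then show "T \<in> lvl d (ext S z) W (Suc a + (b - Suc a))"
          unfolding lvl_def using T True by auto
      qed
      show "lvl d (ext S z) W (Suc a + (b - Suc a))
         \<subseteq> {T. subspace_dim d T b \<and> S \<subseteq> T \<and> T \<subseteq> W \<and> z \<in> T - S}"
        unfolding lvl_def subspace_dim_def using True ext_mem[OF Ss(1), of z] unfolding ext_def by auto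
    qed
    have cz: "real (card {T. subspace_dim d T b \<and> S \<subseteq> T \<and> T \<subseteq> W \<and> z \<in> T - S})
       = gbinom2 (c - Suc a) (b - Suc a)"
      unfolding eqz using lvl_count[OF E W(1) EW cE, of "c - Suc a" "b - Suc a"] W(2) True bc by simp
    define n where "n = c - Suc a"
    define k where "k = b - Suc a"
    have ca: "c - a = Suc n" "b - a = Suc k" using True bc unfolding n_def k_def by auto
    have "gbinom2 (c - a) (b - a) = gbinom2 n k * (2 ^ Suc n - 1) / (2 ^ Suc k - 1)"
      unfolding ca by (rule G_shift)
    have Gp: "gbinom2 n k > 0" using G_pos bc unfolding n_def k_def by simp
    define x :: real where "x = 2 ^ Suc k"
    define y :: real where "y = 2 ^ (c - b)"
    have xy: "2 ^ Suc n = x * y" unfolding x_def y_def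
      using ca True bc by (simp add: power_add[symmetric])
    have x1: "x > 1" unfolding x_def
      by (metis one_less_numeral_iff one_less_power semiring_norm(76) zero_less_Suc)
    have y1: "y \<ge> 1" unfolding y_def by simp
    have "gbinom2 n k \<le> gbinom2 n k * (x * y - 1) / (x - 1) / y"
    proof -
      have "y * (x - 1) \<le> x * y - 1" using y1 by (simp add: algebra_simps)
      then have "1 \<le> (x * y - 1) / (x - 1) / y" using x1 y1 by (simp add: field_simps)
      then show ?thesis using Gp
        by (metis mult.right_neutral mult_left_mono less_eq_real_def times_divide_eq_right)
    qed
    moreover have GG: "gbinom2 (c - a) (b - a) = gbinom2 n k * (x * y - 1) / (x - 1)"
      using \<open>gbinom2 (c - a) (b - a) = _\<close> xy unfolding x_def by simp
    moreover have cz': "real (card {T. subspace_dim d T b \<and> S \<subseteq> T \<and> T \<subseteq> W \<and> z \<in> T - S}) = gbinom2 n k"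
      using cz unfolding n_def k_def .
    moreover have "real (card {T. subspace_dim d T b \<and> S \<subseteq> T \<and> T \<subseteq> W}) / 2 ^ (c - b)
       = gbinom2 (c - a) (b - a) / y" using cPT unfolding y_def by simp
    ultimately show ?thesis by simp
  qed
qed



definition nrm2 :: "st set \<Rightarrow> vec \<Rightarrow> real" where
  "nrm2 X \<psi> = (\<Sum>x\<in>X. (cmod (\<psi> x))\<^sup>2)"

definition nrm :: "st set \<Rightarrow> vec \<Rightarrow> real" where
  "nrm X \<psi> = sqrt (nrm2 X \<psi>)"

definition wt :: "st set \<Rightarrow> nat set set \<Rightarrow> vec \<Rightarrow> real" where
  "wt X D \<psi> = (\<Sum>x\<in>X. if fst x \<in> D then (cmod (\<psi> x))\<^sup>2 else 0)"

lemma nrm_L2: "nrm X \<psi> = L2_set (\<lambda>x. cmod (\<psi> x)) X"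
  unfolding nrm_def nrm2_def L2_set_def ..

lemma nrm2_nonneg: "nrm2 X \<psi> \<ge> 0" unfolding nrm2_def by (simp add: sum_nonneg)

lemma nrm_tri: "nrm X (\<lambda>x. \<phi> x + \<chi> x) \<le> nrm X \<phi> + nrm X \<chi>"
proof -
  have "L2_set (\<lambda>x. cmod (\<phi> x + \<chi> x)) X \<le> L2_set (\<lambda>x. cmod (\<phi> x) + cmod (\<chi> x)) X"
    by (rule L2_set_mono) (auto simp: norm_triangle_ineq)
  also have "\<dots> \<le> L2_set (\<lambda>x. cmod (\<phi> x)) X + L2_set (\<lambda>x. cmod (\<chi> x)) X"
    by (rule L2_set_triangle_ineq)
  finally show ?thesis unfolding nrm_L2 .
qed

lemma cmod_sq: "complex_of_real ((cmod z)\<^sup>2) = cnj z * z"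
  using complex_norm_square by (simp add: mult.commute)

lemma unitary_pres:
  assumes fin: "finite X" and U: "unitary_on X U"
  shows "nrm2 X (apply_mat X U \<psi>) = nrm2 X \<psi>"
proof -
  have "complex_of_real (nrm2 X (apply_mat X U \<psi>)) = (\<Sum>x\<in>X. cnj (\<Sum>y\<in>X. U x y * \<psi> y) * (\<Sum>y\<in>X. U x y * \<psi> y))"
    unfolding nrm2_def of_real_sum cmod_sq apply_mat_def by (intro sum.cong refl) simp
  also have "\<dots> = (\<Sum>x\<in>X. \<Sum>y\<in>X. \<Sum>y'\<in>X. (cnj (U x y) * U x y') * (cnj (\<psi> y) * \<psi> y'))"
    by (simp add: cnj_sum sum_distrib_left sum_distrib_right mult_ac)
  also have "\<dots> = (\<Sum>y\<in>X. \<Sum>x\<in>X. \<Sum>y'\<in>X. (cnj (U x y) * U x y') * (cnj (\<psi> y) * \<psi> y'))"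
    by (rule sum.swap)
  also have "\<dots> = (\<Sum>y\<in>X. \<Sum>y'\<in>X. \<Sum>x\<in>X. (cnj (U x y) * U x y') * (cnj (\<psi> y) * \<psi> y'))"
    by (rule sum.cong[OF refl], rule sum.swap)
  also have "\<dots> = (\<Sum>y\<in>X. \<Sum>y'\<in>X. (\<Sum>x\<in>X. cnj (U x y) * U x y') * (cnj (\<psi> y) * \<psi> y'))"
    by (simp add: sum_distrib_right)
  also have "\<dots> = (\<Sum>y\<in>X. \<Sum>y'\<in>X. (if y = y' then cnj (\<psi> y) * \<psi> y' else 0))"
    using U unfolding unitary_on_def by (intro sum.cong refl) simp
  also have "\<dots> = (\<Sum>y\<in>X. cnj (\<psi> y) * \<psi> y)"
    using fin by simp
  also have "\<dots> = complex_of_real (nrm2 X \<psi>)"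
    unfolding nrm2_def of_real_sum cmod_sq ..
  finally show ?thesis using of_real_eq_iff by blast
qed

lemma apply_mat_diff:
  "apply_mat X U (\<lambda>x. \<phi> x - \<chi> x) = (\<lambda>x. apply_mat X U \<phi> x - apply_mat X U \<chi> x)"
  unfolding apply_mat_def by (auto simp: sum_subtractf right_diff_distrib)

definition sig :: "(nat set \<Rightarrow> nat set) \<Rightarrow> st \<Rightarrow> st" where
  "sig orc x = (fst x, sdiff (fst (snd x)) (orc (fst x)), snd (snd x))"

lemma apply_oracle_sig: "apply_oracle orc \<psi> x = \<psi> (sig orc x)"
  unfolding apply_oracle_def sig_def by (cases x) auto

definition good :: "nat \<Rightarrow> nat \<Rightarrow> (nat set \<Rightarrow> nat set) \<Rightarrow> bool" where
  "good d m orc \<longleftrightarrow> (\<forall>z\<in>Pow {..<d}. orc z \<subseteq> {..<m})"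

lemma sig_in: "good d m orc \<Longrightarrow> x \<in> space d m k \<Longrightarrow> sig orc x \<in> space d m k"
  unfolding good_def space_def sig_def using sdiff_sub by (cases x) auto

lemma sig_sig[simp]: "sig orc (sig orc x) = x"
  unfolding sig_def by (cases x) (auto simp: sdiff_assoc)

lemma fst_sig[simp]: "fst (sig orc x) = fst x" unfolding sig_def by simp

lemma sum_sig:
  assumes "good d m orc"
  shows "(\<Sum>x\<in>space d m k. f (sig orc x)) = (\<Sum>x\<in>space d m k. (f x :: real))"
  by (rule sum.reindex_bij_witness[where i="sig orc" and j="sig orc"]) (use sig_in[OF assms] in auto)

lemma oracle_pres:
  assumes "good d m orc"
  shows "nrm2 (space d m k) (apply_oracle orc \<psi>) = nrm2 (space d m k) \<psi>"
  unfolding nrm2_def apply_oracle_sig using sum_sig[OF assms, of "\<lambda>x. (cmod (\<psi> x))\<^sup>2"] by simp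

lemma apply_oracle_diff:
  "apply_oracle orc (\<lambda>x. \<phi> x - \<chi> x) = (\<lambda>x. apply_oracle orc \<phi> x - apply_oracle orc \<chi> x)"
  unfolding apply_oracle_sig ..

lemma cmod_diff_sq: "(cmod (a - b))\<^sup>2 \<le> 2 * (cmod a)\<^sup>2 + 2 * (cmod b)\<^sup>2"
proof -
  have "cmod (a - b) \<le> cmod a + cmod b" by (rule norm_triangle_ineq4)
  then have "(cmod (a - b))\<^sup>2 \<le> (cmod a + cmod b)\<^sup>2" by (simp add: power_mono)
  also have "\<dots> \<le> 2 * (cmod a)\<^sup>2 + 2 * (cmod b)\<^sup>2"
  proof -
    have "0 \<le> (cmod a - cmod b)\<^sup>2" by simp
    then show ?thesis unfolding power2_sum power2_diff by linarith
  qed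
  finally show ?thesis .
qed

lemma oracle_diff:
  assumes g1: "good d m o1" and g2: "good d m o2"
    and agree: "\<forall>z\<in>Pow {..<d}. z \<notin> D \<longrightarrow> o1 z = o2 z"
  shows "nrm2 (space d m k) (\<lambda>x. apply_oracle o1 \<psi> x - apply_oracle o2 \<psi> x) \<le> 4 * wt (space d m k) D \<psi>"
proof -
  let ?X = "space d m k"
  let ?g = "\<lambda>y. if fst y \<in> D then (cmod (\<psi> y))\<^sup>2 else 0"
  have pt: "(cmod (\<psi> (sig o1 x) - \<psi> (sig o2 x)))\<^sup>2 \<le> 2 * ?g (sig o1 x) + 2 * ?g (sig o2 x)"
    if x: "x \<in> ?X" for x
  proof (cases "fst x \<in> D")
    case True then show ?thesis using cmod_diff_sq by simp
  next
    case False
    have "fst x \<in> Pow {..<d}" using x unfolding space_def by auto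
    then have "sig o1 x = sig o2 x" using agree False unfolding sig_def by auto
    then show ?thesis by simp
  qed
  have "nrm2 ?X (\<lambda>x. apply_oracle o1 \<psi> x - apply_oracle o2 \<psi> x)
      \<le> (\<Sum>x\<in>?X. 2 * ?g (sig o1 x) + 2 * ?g (sig o2 x))"
    unfolding nrm2_def apply_oracle_sig by (rule sum_mono) (use pt in blast)
  also have "\<dots> = 2 * (\<Sum>x\<in>?X. ?g (sig o1 x)) + 2 * (\<Sum>x\<in>?X. ?g (sig o2 x))"
    by (simp add: sum.distrib sum_distrib_left)
  also have "\<dots> = 4 * wt ?X D \<psi>"
    unfolding wt_def using sum_sig[OF g1, of ?g] sum_sig[OF g2, of ?g] by simp
  finally show ?thesis .
qed

lemma run_Nil[simp]: "run_alg X [] orc \<psi> = \<psi>" unfolding run_alg_def by simp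
lemma run_Cons[simp]: "run_alg X (U # Us) orc \<psi> = run_alg X Us orc (apply_mat X U (apply_oracle orc \<psi>))"
  unfolding run_alg_def by simp

lemma finite_space: "finite (space d m k)"
  unfolding space_def by simp

lemma run_pres:
  assumes "good d m orc" "\<forall>U\<in>set Us. unitary_on (space d m k) U"
  shows "nrm2 (space d m k) (run_alg (space d m k) Us orc \<psi>) = nrm2 (space d m k) \<psi>"
  using assms(2)
proof (induction Us arbitrary: \<psi>)
  case Nil then show ?case by simp
next
  case (Cons U Us)
  then show ?case using unitary_pres[OF finite_space] oracle_pres[OF assms(1)] by simp
qed

lemma hybrid:
  assumes g1: "good d m o1" and g2: "good d m o2"
    and agree: "\<forall>z\<in>Pow {..<d}. z \<notin> D \<longrightarrow> o1 z = o2 z"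
    and "\<forall>U\<in>set Us. unitary_on (space d m k) U"
  shows "nrm (space d m k) (\<lambda>x. run_alg (space d m k) Us o1 \<phi> x - run_alg (space d m k) Us o2 \<chi> x)
     \<le> nrm (space d m k) (\<lambda>x. \<phi> x - \<chi> x)
        + (\<Sum>i<length Us. 2 * sqrt (wt (space d m k) D (run_alg (space d m k) (take i Us) o1 \<phi>)))"
  using assms(4)
proof (induction Us arbitrary: \<phi> \<chi>)
  case Nil then show ?case by simp
next
  case (Cons U Us)
  let ?X = "space d m k"
  define \<phi>' where "\<phi>' = apply_mat ?X U (apply_oracle o1 \<phi>)"
  define \<chi>' where "\<chi>' = apply_mat ?X U (apply_oracle o2 \<chi>)"
  have U: "unitary_on ?X U" using Cons.prems by simp
  have IH: "nrm ?X (\<lambda>x. run_alg ?X Us o1 \<phi>' x - run_alg ?X Us o2 \<chi>' x)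
     \<le> nrm ?X (\<lambda>x. \<phi>' x - \<chi>' x)
        + (\<Sum>i<length Us. 2 * sqrt (wt ?X D (run_alg ?X (take i Us) o1 \<phi>')))"
    using Cons by simp
  have "nrm ?X (\<lambda>x. \<phi>' x - \<chi>' x) = nrm ?X (\<lambda>x. apply_oracle o1 \<phi> x - apply_oracle o2 \<chi> x)"
    unfolding \<phi>'_def \<chi>'_def nrm_def apply_mat_diff[symmetric] using unitary_pres[OF finite_space U] by simp
  also have "(\<lambda>x. apply_oracle o1 \<phi> x - apply_oracle o2 \<chi> x)
     = (\<lambda>x. (apply_oracle o1 \<phi> x - apply_oracle o2 \<phi> x) + apply_oracle o2 (\<lambda>x. \<phi> x - \<chi> x) x)"
    unfolding apply_oracle_diff by simp
  also have "nrm ?X \<dots> \<le> nrm ?X (\<lambda>x. apply_oracle o1 \<phi> x - apply_oracle o2 \<phi> x)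
      + nrm ?X (apply_oracle o2 (\<lambda>x. \<phi> x - \<chi> x))"
    by (rule nrm_tri)
  also have "nrm ?X (apply_oracle o2 (\<lambda>x. \<phi> x - \<chi> x)) = nrm ?X (\<lambda>x. \<phi> x - \<chi> x)"
    unfolding nrm_def using oracle_pres[OF g2] by simp
  also have "nrm ?X (\<lambda>x. apply_oracle o1 \<phi> x - apply_oracle o2 \<phi> x) \<le> 2 * sqrt (wt ?X D \<phi>)"
  proof -
    have "nrm ?X (\<lambda>x. apply_oracle o1 \<phi> x - apply_oracle o2 \<phi> x) \<le> sqrt (4 * wt ?X D \<phi>)"
      unfolding nrm_def using oracle_diff[OF g1 g2 agree] real_sqrt_le_mono by blast
    also have "\<dots> = 2 * sqrt (wt ?X D \<phi>)" by (simp add: real_sqrt_mult)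
    finally show ?thesis .
  qed
  finally have st: "nrm ?X (\<lambda>x. \<phi>' x - \<chi>' x) \<le> 2 * sqrt (wt ?X D \<phi>) + nrm ?X (\<lambda>x. \<phi> x - \<chi> x)"
    by simp
  have sm: "(\<Sum>i<length (U # Us). 2 * sqrt (wt ?X D (run_alg ?X (take i (U # Us)) o1 \<phi>)))
     = 2 * sqrt (wt ?X D \<phi>) + (\<Sum>i<length Us. 2 * sqrt (wt ?X D (run_alg ?X (take i Us) o1 \<phi>')))"
    unfolding \<phi>'_def by (simp add: sum.lessThan_Suc_shift del: sum.lessThan_Suc)
  show ?case using IH st sm unfolding \<phi>'_def \<chi>'_def by simp
qed



lemma cs_sum:
  fixes f :: "nat \<Rightarrow> real"
  assumes "\<And>i. f i \<ge> 0"
  shows "(\<Sum>i<L. f i)\<^sup>2 \<le> real L * (\<Sum>i<L. (f i)\<^sup>2)"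
proof -
  have "(\<Sum>i<L. \<bar>f i\<bar> * \<bar>1\<bar>) \<le> L2_set f {..<L} * L2_set (\<lambda>_. 1) {..<L}"
    by (rule L2_set_mult_ineq)
  then have h: "(\<Sum>i<L. f i) \<le> L2_set f {..<L} * sqrt (real L)"
    using assms by (simp add: L2_set_constant)
  have "0 \<le> (\<Sum>i<L. f i)" using assms by (simp add: sum_nonneg)
  then have "(\<Sum>i<L. f i)\<^sup>2 \<le> (L2_set f {..<L} * sqrt (real L))\<^sup>2"
    using h by (simp add: power_mono)
  also have "\<dots> = (\<Sum>i<L. (f i)\<^sup>2) * real L"
    unfolding L2_set_def power_mult_distrib by (simp add: sum_nonneg)
  finally show ?thesis by (simp add: mult.commute)
qed

lemma cmod_diff_sq_Re: "(cmod (a - b))\<^sup>2 = (cmod a)\<^sup>2 + (cmod b)\<^sup>2 - 2 * Re (cnj a * b)"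
  by (simp add: cmod_power2 power2_diff algebra_simps)

lemma td_le:
  assumes fin: "finite Y" and n1: "(\<Sum>y\<in>Y. (cmod (\<phi> y))\<^sup>2) = 1" and n2: "(\<Sum>y\<in>Y. (cmod (\<chi> y))\<^sup>2) = 1"
  shows "td_pure Y \<phi> \<chi> \<le> sqrt (\<Sum>y\<in>Y. (cmod (\<phi> y - \<chi> y))\<^sup>2)"
proof -
  let ?r = "Re (vinner Y \<phi> \<chi>)"
  have "(\<Sum>y\<in>Y. (cmod (\<phi> y - \<chi> y))\<^sup>2) = (\<Sum>y\<in>Y. (cmod (\<phi> y))\<^sup>2) + (\<Sum>y\<in>Y. (cmod (\<chi> y))\<^sup>2) - 2 * ?r"
    unfolding cmod_diff_sq_Re vinner_def by (simp add: sum.distrib sum_subtractf sum_distrib_left)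
  then have e: "(\<Sum>y\<in>Y. (cmod (\<phi> y - \<chi> y))\<^sup>2) = 2 - 2 * ?r" using n1 n2 by simp
  have "?r\<^sup>2 \<le> (cmod (vinner Y \<phi> \<chi>))\<^sup>2"
    using abs_Re_le_cmod by (metis abs_ge_zero power2_abs power_mono)
  moreover have "0 \<le> (1 - ?r)\<^sup>2" by simp
  ultimately have "1 - (cmod (vinner Y \<phi> \<chi>))\<^sup>2 \<le> 2 - 2 * ?r"
    by (simp add: power2_diff)
  then show ?thesis unfolding td_pure_def e by (rule real_sqrt_le_mono)
qed

lemma sum_phi:
  fixes F :: "nat set set \<Rightarrow> nat set set \<Rightarrow> vec"
  assumes "finite P" "finite X" and Npos: "N > 0"
  shows "(\<Sum>y\<in>P \<times> X. (cmod ((\<lambda>((S, T), x). if (S, T) \<in> P then F S T x / complex_of_real (sqrt N) else 0) y))\<^sup>2)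
     = (\<Sum>(S, T)\<in>P. nrm2 X (F S T) / N)"
proof -
  have "(\<Sum>y\<in>P \<times> X. (cmod ((\<lambda>((S, T), x). if (S, T) \<in> P then F S T x / complex_of_real (sqrt N) else 0) y))\<^sup>2)
    = (\<Sum>p\<in>P. \<Sum>x\<in>X. (cmod ((\<lambda>((S, T), x). if (S, T) \<in> P then F S T x / complex_of_real (sqrt N) else 0) (p, x)))\<^sup>2)"
    by (rule sum.cartesian_product')
  also have "\<dots> = (\<Sum>p\<in>P. nrm2 X (F (fst p) (snd p)) / N)"
  proof (rule sum.cong[OF refl])
    fix p assume p: "p \<in> P"
    obtain S T where pe: "p = (S, T)" by (cases p)
    have "(\<Sum>x\<in>X. (cmod ((\<lambda>((S, T), x). if (S, T) \<in> P then F S T x / complex_of_real (sqrt N) else 0) (p, x)))\<^sup>2)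
       = (\<Sum>x\<in>X. (cmod (F S T x))\<^sup>2 / N)"
      using p pe Npos by (simp add: norm_divide power_divide)
    also have "\<dots> = nrm2 X (F S T) / N" unfolding nrm2_def by (simp add: sum_divide_distrib)
    finally show "(\<Sum>x\<in>X. (cmod ((\<lambda>((S, T), x). if (S, T) \<in> P then F S T x / complex_of_real (sqrt N) else 0) (p, x)))\<^sup>2)
       = nrm2 X (F (fst p) (snd p)) / N" using pe Npos by simp
  qed
  finally show ?thesis by (simp add: case_prod_beta)
qed

lemma phi_diff:
  "(\<lambda>y. (\<lambda>((S, T), x). if (S, T) \<in> P then F1 S T x / complex_of_real (sqrt N) else 0) y
         - (\<lambda>((S, T), x). if (S, T) \<in> P then F2 S T x / complex_of_real (sqrt N) else 0) y)
   = (\<lambda>((S, T), x). if (S, T) \<in> P then (F1 S T x - F2 S T x) / complex_of_real (sqrt N) else 0)"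
  by (auto simp: diff_divide_distrib)

lemma wsum_bound:
  assumes W: "is_subspace d W" "card W = 2 ^ c" and ab: "a \<le> b" and bc: "b \<le> c"
    and S: "subspace_dim d S a" "S \<subseteq> W"
    and fX: "finite X"
    and n1: "nrm2 X \<psi> = 1"
  shows "(\<Sum>T\<in>{T. subspace_dim d T b \<and> S \<subseteq> T \<and> T \<subseteq> W}. wt X (T - S) \<psi>)
     \<le> real (card {T. subspace_dim d T b \<and> S \<subseteq> T \<and> T \<subseteq> W}) / 2 ^ (c - b)"
proof -
  let ?PT = "{T. subspace_dim d T b \<and> S \<subseteq> T \<and> T \<subseteq> W}"
  have finPT: "finite ?PT"
  proof -
    have "?PT \<subseteq> Pow W" by auto
    moreover have "finite W" using W subspace_finite by blast
    ultimately show ?thesis using finite_subset by blast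
  qed
  have "(\<Sum>T\<in>?PT. wt X (T - S) \<psi>) = (\<Sum>x\<in>X. \<Sum>T\<in>?PT. if fst x \<in> T - S then (cmod (\<psi> x))\<^sup>2 else 0)"
    unfolding wt_def by (rule sum.swap)
  also have "\<dots> = (\<Sum>x\<in>X. (cmod (\<psi> x))\<^sup>2 * real (card {T. subspace_dim d T b \<and> S \<subseteq> T \<and> T \<subseteq> W \<and> fst x \<in> T - S}))"
  proof (rule sum.cong[OF refl])
    fix x
    have "(\<Sum>T\<in>?PT. if fst x \<in> T - S then (cmod (\<psi> x))\<^sup>2 else 0)
        = (\<Sum>T\<in>{T\<in>?PT. fst x \<in> T - S}. (cmod (\<psi> x))\<^sup>2)"
      by (rule sum.inter_filter[OF finPT, symmetric])
    also have "{T\<in>?PT. fst x \<in> T - S} = {T. subspace_dim d T b \<and> S \<subseteq> T \<and> T \<subseteq> W \<and> fst x \<in> T - S}"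
      by auto
    finally show "(\<Sum>T\<in>?PT. if fst x \<in> T - S then (cmod (\<psi> x))\<^sup>2 else 0)
        = (cmod (\<psi> x))\<^sup>2 * real (card {T. subspace_dim d T b \<and> S \<subseteq> T \<and> T \<subseteq> W \<and> fst x \<in> T - S})"
      by simp
  qed
  also have "\<dots> \<le> (\<Sum>x\<in>X. (cmod (\<psi> x))\<^sup>2 * (real (card ?PT) / 2 ^ (c - b)))"
    by (rule sum_mono, rule mult_left_mono) (use count_z[OF W ab bc S] in auto)
  also have "\<dots> = nrm2 X \<psi> * (real (card ?PT) / 2 ^ (c - b))"
    unfolding nrm2_def by (rule sum_distrib_right[symmetric])
  finally show ?thesis using n1 by simp
qed

lemma main:
  fixes X :: "st set" and P :: "(nat set set \<times> nat set set) set" and N :: real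
    and OS :: "nat set set \<Rightarrow> nat set \<Rightarrow> nat set"
    and OST :: "nat set set \<Rightarrow> nat set set \<Rightarrow> nat set \<Rightarrow> nat set"
    and V0 :: "nat set set \<Rightarrow> vec" and bot :: "nat set"
  assumes X: "X = space d m k"
    and P: "P = {(S, T). subspace_dim d S a \<and> subspace_dim d T b \<and> S \<subseteq> T \<and> T \<subseteq> W}"
    and N: "N = gbinom2 c b * gbinom2 b a"
    and phiS: "phiS = (\<lambda>((S, T), x). if (S, T) \<in> P
                     then run_alg X Us (OS S) (V0 S) x / complex_of_real (sqrt N) else 0)"
    and phiT: "phiT = (\<lambda>((S, T), x). if (S, T) \<in> P
                     then run_alg X Us (OST S T) (V0 S) x / complex_of_real (sqrt N) else 0)"
    and H: "a \<le> b \<and> b < c \<and> c \<le> d \<and> subspace_dim d W c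
          \<and> bot \<subseteq> {..<m}
          \<and> (\<forall>S. subspace_dim d S a \<longrightarrow> (\<forall>z\<in>Pow {..<d}.
                 OS S z \<subseteq> {..<m} \<and> (z \<notin> S \<longrightarrow> OS S z = bot)))
          \<and> (\<forall>(S, T)\<in>P. \<forall>z\<in>Pow {..<d}.
                 OST S T z \<subseteq> {..<m} \<and> (z \<in> S \<longrightarrow> OST S T z = OS S z)
                 \<and> (z \<notin> T \<longrightarrow> OST S T z = bot))
          \<and> (\<forall>S. subspace_dim d S a \<longrightarrow> (\<forall>x. x \<notin> X \<longrightarrow> V0 S x = 0))
          \<and> (\<forall>S S'. subspace_dim d S a \<longrightarrow> subspace_dim d S' a \<longrightarrow>
                 vinner X (V0 S) (V0 S') = (if S = S' then 1 else 0))
          \<and> (\<forall>U\<in>set Us. unitary_on X U)"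
  shows "td_pure (P \<times> X) phiS phiT \<le> poly [:0, 2:] (real (length Us)) / 2 powr ((real c - real b) / 2)"
proof -
  define L where "L = length Us"
  have ab: "a \<le> b" and bc: "b < c" and Wd: "subspace_dim d W c"
    and HOS: "\<And>S z. subspace_dim d S a \<Longrightarrow> z \<in> Pow {..<d} \<Longrightarrow> OS S z \<subseteq> {..<m} \<and> (z \<notin> S \<longrightarrow> OS S z = bot)"
    and HOST0: "\<forall>(S, T)\<in>P. \<forall>z\<in>Pow {..<d}.
                 OST S T z \<subseteq> {..<m} \<and> (z \<in> S \<longrightarrow> OST S T z = OS S z)
                 \<and> (z \<notin> T \<longrightarrow> OST S T z = bot)"
    and HV0: "\<And>S. subspace_dim d S a \<Longrightarrow> vinner X (V0 S) (V0 S) = 1"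
    and HU: "\<forall>U\<in>set Us. unitary_on (space d m k) U"
    using H X by auto
  have HOST: "OST S T z \<subseteq> {..<m} \<and> (z \<in> S \<longrightarrow> OST S T z = OS S z) \<and> (z \<notin> T \<longrightarrow> OST S T z = bot)"
    if "(S, T) \<in> P" "z \<in> Pow {..<d}" for S T z
    using bspec[OF HOST0 that(1)] that(2) by simp
  have Ws: "is_subspace d W" "card W = 2 ^ c" using Wd unfolding subspace_dim_def by auto
  have finX: "finite X" using X finite_space by simp
  have finW: "finite W" using Ws subspace_finite by blast
  have finP: "finite P"
  proof -
    have "P \<subseteq> Pow W \<times> Pow W" unfolding P by auto
    then show ?thesis using finW finite_subset by blast
  qed
  have Npos: "N > 0" unfolding N using G_pos ab bc by simp
  have cardP: "real (card P) = N" unfolding P N using count_P[OF Ws ab] bc by simp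
  have goodS: "good d m (OS S)" if "subspace_dim d S a" for S
    using HOS[OF that] unfolding good_def by blast
  have goodT: "good d m (OST S T)" if "(S, T) \<in> P" for S T
    using HOST[OF that] unfolding good_def by blast
  have n1V: "nrm2 X (V0 S) = 1" if "subspace_dim d S a" for S
  proof -
    have "complex_of_real (nrm2 X (V0 S)) = vinner X (V0 S) (V0 S)"
      unfolding nrm2_def vinner_def of_real_sum cmod_sq ..
    then show ?thesis using HV0[OF that] by simp
  qed
  have PS: "subspace_dim d S a" if "(S, T) \<in> P" for S T using that unfolding P by auto
  have nF1: "nrm2 X (run_alg X Us (OS S) (V0 S)) = 1" if "(S, T) \<in> P" for S T
    using run_pres[OF goodS[OF PS[OF that]] HU] n1V[OF PS[OF that]] X by simp
  have nF2: "nrm2 X (run_alg X Us (OST S T) (V0 S)) = 1" if "(S, T) \<in> P" for S T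
    using run_pres[OF goodT[OF that] HU] n1V[OF PS[OF that]] X by simp
  have s1: "(\<Sum>y\<in>P \<times> X. (cmod (phiS y))\<^sup>2) = 1"
  proof -
    have "(\<Sum>y\<in>P \<times> X. (cmod (phiS y))\<^sup>2) = (\<Sum>(S, T)\<in>P. nrm2 X (run_alg X Us (OS S) (V0 S)) / N)"
      unfolding phiS using sum_phi[OF finP finX Npos, of "\<lambda>S T. run_alg X Us (OS S) (V0 S)"] by simp
    also have "\<dots> = (\<Sum>p\<in>P. 1 / N)"
      by (rule sum.cong[OF refl]) (use nF1 in auto)
    also have "\<dots> = 1" using cardP Npos by simp
    finally show ?thesis .
  qed
  have s2: "(\<Sum>y\<in>P \<times> X. (cmod (phiT y))\<^sup>2) = 1"
  proof -
    have "(\<Sum>y\<in>P \<times> X. (cmod (phiT y))\<^sup>2) = (\<Sum>(S, T)\<in>P. nrm2 X (run_alg X Us (OST S T) (V0 S)) / N)"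
      unfolding phiT using sum_phi[OF finP finX Npos, of "\<lambda>S T. run_alg X Us (OST S T) (V0 S)"] by simp
    also have "\<dots> = (\<Sum>p\<in>P. 1 / N)"
      by (rule sum.cong[OF refl]) (use nF2 in auto)
    also have "\<dots> = 1" using cardP Npos by simp
    finally show ?thesis .
  qed
  define w where "w i S T = wt X (T - S) (run_alg X (take i Us) (OS S) (V0 S))" for i S T
  have w0: "w i S T \<ge> 0" for i S T unfolding w_def wt_def by (simp add: sum_nonneg)
  have hyb: "nrm2 X (\<lambda>x. run_alg X Us (OS S) (V0 S) x - run_alg X Us (OST S T) (V0 S) x)
       \<le> 4 * real L * (\<Sum>i<L. w i S T)" if ST: "(S, T) \<in> P" for S T
  proof -
    have agree: "\<forall>z\<in>Pow {..<d}. z \<notin> T - S \<longrightarrow> OS S z = OST S T z"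
    proof (intro ballI impI)
      fix z assume z: "z \<in> Pow {..<d}" "z \<notin> T - S"
      have ST': "S \<subseteq> T" using ST unfolding P by auto
      show "OS S z = OST S T z"
      proof (cases "z \<in> S")
        case True then show ?thesis using HOST[OF ST z(1)] by simp
      next
        case False
        then have "z \<notin> T" using z(2) by blast
        then show ?thesis using HOST[OF ST z(1)] HOS[OF PS[OF ST] z(1)] False by simp
      qed
    qed
    have "nrm X (\<lambda>x. run_alg X Us (OS S) (V0 S) x - run_alg X Us (OST S T) (V0 S) x)
        \<le> nrm X (\<lambda>x. V0 S x - V0 S x) + (\<Sum>i<L. 2 * sqrt (w i S T))"
      using hybrid[OF goodS[OF PS[OF ST]] goodT[OF ST] agree HU, of "V0 S" "V0 S"] X
      unfolding w_def L_def by simp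
    also have "nrm X (\<lambda>x. V0 S x - V0 S x) = 0" unfolding nrm_def nrm2_def by simp
    finally have h1: "nrm X (\<lambda>x. run_alg X Us (OS S) (V0 S) x - run_alg X Us (OST S T) (V0 S) x)
        \<le> (\<Sum>i<L. 2 * sqrt (w i S T))" by simp
    have "nrm2 X (\<lambda>x. run_alg X Us (OS S) (V0 S) x - run_alg X Us (OST S T) (V0 S) x)
        = (nrm X (\<lambda>x. run_alg X Us (OS S) (V0 S) x - run_alg X Us (OST S T) (V0 S) x))\<^sup>2"
      unfolding nrm_def using nrm2_nonneg by simp
    also have "\<dots> \<le> (\<Sum>i<L. 2 * sqrt (w i S T))\<^sup>2"
      by (rule power_mono[OF h1]) (simp add: nrm_def nrm2_nonneg)
    also have "\<dots> \<le> real L * (\<Sum>i<L. (2 * sqrt (w i S T))\<^sup>2)"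
      by (rule cs_sum) (simp add: w0)
    also have "\<dots> = 4 * real L * (\<Sum>i<L. w i S T)"
      using w0 by (simp add: power_mult_distrib sum_distrib_left mult_ac)
    finally show ?thesis .
  qed
  define SS where "SS = {S. subspace_dim d S a \<and> S \<subseteq> W}"
  define PT where "PT S = {T. subspace_dim d T b \<and> S \<subseteq> T \<and> T \<subseteq> W}" for S
  have PSig: "P = Sigma SS PT" unfolding P SS_def PT_def by auto
  have finSS: "finite SS"
  proof -
    have "SS \<subseteq> Pow W" unfolding SS_def by auto
    then show ?thesis using finW finite_subset by blast
  qed
  have finPT: "\<forall>S\<in>SS. finite (PT S)"
  proof
    fix S
    have "PT S \<subseteq> Pow W" unfolding PT_def by auto
    then show "finite (PT S)" using finW finite_subset by blast
  qed
  have wsum: "(\<Sum>(S, T)\<in>P. w i S T) \<le> N / 2 ^ (c - b)" for i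
  proof -
    have "(\<Sum>(S, T)\<in>P. w i S T) = (\<Sum>S\<in>SS. \<Sum>T\<in>PT S. w i S T)"
      unfolding PSig by (rule sum.Sigma[OF finSS finPT, symmetric])
    also have "\<dots> \<le> (\<Sum>S\<in>SS. real (card (PT S)) / 2 ^ (c - b))"
    proof (rule sum_mono)
      fix S assume S: "S \<in> SS"
      have Sd: "subspace_dim d S a" "S \<subseteq> W" using S unfolding SS_def by auto
      have HUt: "\<forall>U\<in>set (take i Us). unitary_on (space d m k) U"
        using HU by (meson in_set_takeD)
      have "nrm2 X (run_alg X (take i Us) (OS S) (V0 S)) = 1"
        using run_pres[OF goodS[OF Sd(1)] HUt] n1V[OF Sd(1)] X by simp
      then show "(\<Sum>T\<in>PT S. w i S T) \<le> real (card (PT S)) / 2 ^ (c - b)"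
        unfolding w_def PT_def using wsum_bound[OF Ws ab _ Sd finX] bc by simp
    qed
    also have "\<dots> = real (\<Sum>S\<in>SS. card (PT S)) / 2 ^ (c - b)"
      by (simp add: sum_divide_distrib)
    also have "(\<Sum>S\<in>SS. card (PT S)) = card P"
      unfolding PSig using card_SigmaI[OF finSS finPT] by simp
    finally show ?thesis using cardP by simp
  qed
  have pd: "phiS y - phiT y = (\<lambda>((S, T), x). if (S, T) \<in> P
      then (run_alg X Us (OS S) (V0 S) x - run_alg X Us (OST S T) (V0 S) x) / complex_of_real (sqrt N) else 0) y" for y
    unfolding phiS phiT by (cases y) (auto simp: diff_divide_distrib)
  have delta: "(\<Sum>y\<in>P \<times> X. (cmod (phiS y - phiT y))\<^sup>2) \<le> 4 * (real L)\<^sup>2 / 2 ^ (c - b)"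
  proof -
    have "(\<Sum>y\<in>P \<times> X. (cmod (phiS y - phiT y))\<^sup>2)
        = (\<Sum>(S, T)\<in>P. nrm2 X (\<lambda>x. run_alg X Us (OS S) (V0 S) x - run_alg X Us (OST S T) (V0 S) x) / N)"
      unfolding pd
      using sum_phi[OF finP finX Npos, of "\<lambda>S T x. run_alg X Us (OS S) (V0 S) x - run_alg X Us (OST S T) (V0 S) x"]
      by simp
    also have "\<dots> \<le> (\<Sum>(S, T)\<in>P. 4 * real L * (\<Sum>i<L. w i S T) / N)"
      by (rule sum_mono) (use hyb Npos in \<open>auto simp: divide_right_mono\<close>)
    also have "\<dots> = 4 * real L / N * (\<Sum>i<L. \<Sum>(S, T)\<in>P. w i S T)"
      by (subst sum.swap) (simp add: sum_distrib_left sum_divide_distrib case_prod_beta mult_ac)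
    also have "\<dots> \<le> 4 * real L / N * (\<Sum>i<L. N / 2 ^ (c - b))"
      by (rule mult_left_mono, rule sum_mono) (use wsum Npos in auto)
    also have "\<dots> = 4 * (real L)\<^sup>2 / 2 ^ (c - b)"
      using Npos by (simp add: power2_eq_square)
    finally show ?thesis .
  qed
  have "td_pure (P \<times> X) phiS phiT \<le> sqrt (\<Sum>y\<in>P \<times> X. (cmod (phiS y - phiT y))\<^sup>2)"
    by (rule td_le[OF _ s1 s2]) (use finP finX in simp)
  also have "\<dots> \<le> sqrt (4 * (real L)\<^sup>2 / 2 ^ (c - b))"
    using delta real_sqrt_le_mono by blast
  also have "\<dots> = 2 * real L / sqrt (2 ^ (c - b))"
    by (simp add: real_sqrt_divide real_sqrt_mult)
  also have "sqrt (2 ^ (c - b)) = 2 powr ((real c - real b) / 2)"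
  proof -
    have e: "real c - real b = real (c - b)" using bc by simp
    have "(2::real) powr (real (c - b) / 2) = sqrt (2 powr real (c - b))"
      by (rule powr_half_sqrt_powr) simp
    also have "(2::real) powr real (c - b) = 2 ^ (c - b)" by (rule powr_realpow) simp
    finally show ?thesis unfolding e by simp
  qed
  finally show ?thesis unfolding L_def by (simp add: mult.commute)
qed


theorem mainTheorem1:
  "\<exists>q :: real poly. \<forall>d m k a b c W OS OST bot V0 Us.
     (let X = space d m k;
          P = {(S, T). subspace_dim d S a \<and> subspace_dim d T b \<and> S \<subseteq> T \<and> T \<subseteq> W};
          N = gbinom2 c b * gbinom2 b a;
          phiS = (\<lambda>((S, T), x). if (S, T) \<in> P
                     then run_alg X Us (OS S) (V0 S) x / complex_of_real (sqrt N) else 0);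
          phiT = (\<lambda>((S, T), x). if (S, T) \<in> P
                     then run_alg X Us (OST S T) (V0 S) x / complex_of_real (sqrt N) else 0)
      in (a \<le> b \<and> b < c \<and> c \<le> d \<and> subspace_dim d W c
          \<and> bot \<subseteq> {..<m}
          \<and> (\<forall>S. subspace_dim d S a \<longrightarrow> (\<forall>z\<in>Pow {..<d}.
                 OS S z \<subseteq> {..<m} \<and> (z \<notin> S \<longrightarrow> OS S z = bot)))
          \<and> (\<forall>(S, T)\<in>P. \<forall>z\<in>Pow {..<d}.
                 OST S T z \<subseteq> {..<m} \<and> (z \<in> S \<longrightarrow> OST S T z = OS S z)
                 \<and> (z \<notin> T \<longrightarrow> OST S T z = bot))
          \<and> (\<forall>S. subspace_dim d S a \<longrightarrow> (\<forall>x. x \<notin> X \<longrightarrow> V0 S x = 0))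
          \<and> (\<forall>S S'. subspace_dim d S a \<longrightarrow> subspace_dim d S' a \<longrightarrow>
                 vinner X (V0 S) (V0 S') = (if S = S' then 1 else 0))
          \<and> (\<forall>U\<in>set Us. unitary_on X U))
         \<longrightarrow> td_pure (P \<times> X) phiS phiT
               \<le> poly q (real (length Us)) / 2 powr ((real c - real b) / 2))"
    apply (rule exI[of _ "[:0, 2:]"])
  apply (intro allI)
  apply (unfold Let_def)
  apply (intro impI)
  apply (rule main[OF refl refl refl refl refl])
  apply assumption
  done

end
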